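(* Let $X=\Gamma_1\sqcup\Gamma_2$ be a Heisenberg partition of a topological space $X$. Then for every continuous injective map $\gamma\colon\mathbb T\to X$ we have $\gamma(\mathbb T)\subseteq\Gamma_2$.
   Context: $\mathbb T=\{z\in\mathbb C\mid |z|=1\}$. A Heisenberg partition of $X$ is a partition $X=\Gamma_1\sqcup\Gamma_2$ such that for some integer $n\ge1$: (i) $\Gamma_1$ is open in $X$ and there is a homeomorphism $\psi_1\colon\mathbb R^\times\to\Gamma_1$ ($\mathbb R^\times=\mathbb R\setminus\{0\}$); (ii) there is a homeomorphism $\psi_2\colon\mathbb R^{2n}\to\Gamma_2$; (iii) for every subset $A\subseteq\mathbb R^\times$ the following are equivalent: $0$ is an accumulation point of $A$; $\Gamma_2\cap\overline{\psi_1(A)}\ne\emptyset$; $\Gamma_2\subseteq\overline{\psi_1(A)}$. *)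

theory Defs
  imports "HOL-Analysis.Analysis"
begin

text \<open>Heisenberg partition of a topological space X (given as an abstract topology).
  R^x = R - {0} with the Euclidean subspace topology; R^(2n) is Euclidean_space (2*n).\<close>

definition heisenberg_partition :: "'a topology \<Rightarrow> 'a set \<Rightarrow> 'a set \<Rightarrow> bool" where
  "heisenberg_partition X \<Gamma>1 \<Gamma>2 \<longleftrightarrow>
     \<Gamma>1 \<union> \<Gamma>2 = topspace X \<and> \<Gamma>1 \<inter> \<Gamma>2 = {} \<and>
     (\<exists>n::nat. n \<ge> 1 \<and>
       openin X \<Gamma>1 \<and>
       (\<exists>\<psi>1 :: real \<Rightarrow> 'a. \<exists>\<psi>2 :: (nat \<Rightarrow> real) \<Rightarrow> 'a.
          homeomorphic_map (top_of_set (- {0})) (subtopology X \<Gamma>1) \<psi>1 \<and>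
          homeomorphic_map (Euclidean_space (2 * n)) (subtopology X \<Gamma>2) \<psi>2 \<and>
          (\<forall>A \<subseteq> - {0::real}.
             ((0::real) islimpt A \<longleftrightarrow> \<Gamma>2 \<inter> X closure_of (\<psi>1 ` A) \<noteq> {}) \<and>
             (\<Gamma>2 \<inter> X closure_of (\<psi>1 ` A) \<noteq> {} \<longleftrightarrow> \<Gamma>2 \<subseteq> X closure_of (\<psi>1 ` A)))))"

end

theory Submission
  imports Defs
begin

lemma cis_inj_small:
  fixes s t :: real
  assumes "\<bar>s - t\<bar> < 2*pi" "cis s = cis t"
  shows "s = t"
proof -
  have "sin s = sin t \<and> cos s = cos t" using assms(2) by (simp add: complex_eq_iff)
  then obtain n :: int where n: "s = t + 2*pi*n" using sin_cos_eq_iff by blast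
  then have "\<bar>2*pi*n\<bar> < 2*pi" using assms(1) by simp
  then have "\<bar>real_of_int n\<bar> < 1" by (simp add: abs_mult)
  then have "n = 0" by linarith
  then show ?thesis using n by simp
qed

lemma cis_periodic_int:
  fixes s :: real and k :: int
  shows "cis (s + 2*pi*k) = cis s"
proof -
  have "cis (s + 2*pi*k) = cis s * cis (2*pi*k)" by (metis cis_mult)
  also have "cis (2*pi*k) = 1" by (rule cis_multiple_2pi) simp
  finally show ?thesis by simp
qed

lemma four_cyclic:
  fixes p0 p1 p2 p3 :: real
  assumes "(p0 < p1 \<and> p1 < p2) \<or> (p2 < p1 \<and> p1 < p0)"
   "(p1 < p2 \<and> p2 < p3) \<or> (p3 < p2 \<and> p2 < p1)"
   "(p2 < p3 \<and> p3 < p0) \<or> (p0 < p3 \<and> p3 < p2)"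
  shows False
  using assms by linarith


lemma interval_clash_pos:
  fixes P Q R :: "real set"
  assumes "connected R" "0 \<notin> R" "P \<subseteq> R" "Q \<subseteq> R" "connected Q"
    "0 islimpt P" "0 islimpt Q" "x \<in> Q" "x > 0"
  shows "P \<inter> Q \<noteq> {}"
proof -
  have pos: "w > 0" if "w \<in> R" for w
  proof (rule ccontr)
    assume "\<not> w > 0"
    then have "w < 0" using that assms(2) by (cases "w = 0") auto
    then have "0 \<in> {w..x}" using assms(9) by simp
    moreover have "{w..x} \<subseteq> R" using connected_contains_Icc[OF assms(1) that] assms(4,8) by blast
    ultimately show False using assms(2) by blast
  qed
  obtain y where y: "y \<in> P" "y \<noteq> 0" "dist y 0 < x"
    using assms(6,9) unfolding islimpt_approachable by blast
  have y0: "y > 0" using pos y(1) assms(3) by blast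
  obtain w where w: "w \<in> Q" "w \<noteq> 0" "dist w 0 < y"
    using assms(7) y0 unfolding islimpt_approachable by blast
  have w0: "w > 0" using pos w(1) assms(4) by blast
  have "{w..x} \<subseteq> Q" using connected_contains_Icc[OF assms(5) w(1) assms(8)] .
  moreover have "y \<in> {w..x}" using y w y0 w0 by (auto simp: dist_real_def)
  ultimately show ?thesis using y(1) by blast
qed

lemma interval_clash:
  fixes P Q R :: "real set"
  assumes "connected R" "0 \<notin> R" "P \<subseteq> R" "Q \<subseteq> R" "connected Q"
    "0 islimpt P" "0 islimpt Q" "x \<in> Q"
  shows "P \<inter> Q \<noteq> {}"
proof (cases "x > 0")
  case True
  show ?thesis by (rule interval_clash_pos[OF assms True])
next
  case False
  have "x \<noteq> 0" using assms(2,4,8) by blast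
  then have x: "- x > 0" using False by linarith
  have lim: "0 islimpt uminus ` A" if lA: "0 islimpt A" for A :: "real set"
    unfolding islimpt_approachable
  proof (intro allI impI)
    fix e :: real assume "e > 0"
    then obtain y where y: "y \<in> A" "y \<noteq> 0" "dist y 0 < e" using lA unfolding islimpt_approachable by blast
    have "- y \<in> uminus ` A" using y(1) by (rule imageI)
    moreover have "- y \<noteq> 0" "dist (- y) 0 < e" using y(2,3) by (simp_all add: dist_real_def)
    ultimately show "\<exists>x'\<in>uminus ` A. x' \<noteq> 0 \<and> dist x' 0 < e" by blast
  qed
  have cR: "connected (uminus ` R)"
    using connected_continuous_image[OF continuous_on_minus[OF continuous_on_id] assms(1)] by simp
  have cQ: "connected (uminus ` Q)"
    using connected_continuous_image[OF continuous_on_minus[OF continuous_on_id] assms(5)] by simp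
  have n0: "0 \<notin> uminus ` R" using assms(2) by (auto simp: image_iff)
  have sP: "uminus ` P \<subseteq> uminus ` R" using assms(3) by (rule image_mono)
  have sQ: "uminus ` Q \<subseteq> uminus ` R" using assms(4) by (rule image_mono)
  have xQ: "- x \<in> uminus ` Q" using assms(8) by (rule imageI)
  have "uminus ` P \<inter> uminus ` Q \<noteq> {}"
    by (rule interval_clash_pos[OF cR n0 sP sQ cQ lim[OF assms(6)] lim[OF assms(7)] xQ x])
  then obtain u where u: "u \<in> uminus ` P" "u \<in> uminus ` Q" by blast
  from u(1) obtain p where p: "p \<in> P" "u = - p" by (rule imageE)
  from u(2) obtain q where q: "q \<in> Q" "u = - q" by (rule imageE)
  have "p = q" using p(2) q(2) by simp
  then show ?thesis using p(1) q(1) by blast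
qed

theorem lemma2p6:
  fixes X :: "'a topology" and \<Gamma>1 \<Gamma>2 :: "'a set" and \<gamma> :: "complex \<Rightarrow> 'a"
  assumes "heisenberg_partition X \<Gamma>1 \<Gamma>2"
    and "continuous_map (top_of_set (sphere (0::complex) 1)) X \<gamma>"
    and "inj_on \<gamma> (sphere (0::complex) 1)"
  shows "\<gamma> ` sphere 0 1 \<subseteq> \<Gamma>2"
proof (rule ccontr)
  assume "\<not> \<gamma> ` sphere 0 1 \<subseteq> \<Gamma>2"
  then obtain z where z: "z \<in> sphere (0::complex) 1" "\<gamma> z \<notin> \<Gamma>2" by blast
  obtain \<psi>1 :: "real \<Rightarrow> 'a" where
    U: "\<Gamma>1 \<union> \<Gamma>2 = topspace X" and op: "openin X \<Gamma>1"
    and hm1: "homeomorphic_map (top_of_set (- {0})) (subtopology X \<Gamma>1) \<psi>1"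
    and L0: "\<forall>A \<subseteq> - {0::real}. ((0::real) islimpt A \<longleftrightarrow> \<Gamma>2 \<inter> X closure_of (\<psi>1 ` A) \<noteq> {}) \<and>
             (\<Gamma>2 \<inter> X closure_of (\<psi>1 ` A) \<noteq> {} \<longleftrightarrow> \<Gamma>2 \<subseteq> X closure_of (\<psi>1 ` A))"
    using assms(1) unfolding heisenberg_partition_def by (elim conjE exE) (rule that; assumption)
  from hm1 obtain \<phi> where hms: "homeomorphic_maps (top_of_set (- {0})) (subtopology X \<Gamma>1) \<psi>1 \<phi>"
    using homeomorphic_map_maps by blast
  have L: "(0::real) islimpt A" if "A \<subseteq> - {0}" "\<Gamma>2 \<inter> X closure_of (\<psi>1 ` A) \<noteq> {}" for A
    using L0 that by blast
  have G1: "\<Gamma>1 \<subseteq> topspace X" using U by blast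
  have tsp: "topspace (subtopology X \<Gamma>1) = \<Gamma>1" using G1 by (rule topspace_subtopology_subset)
  have phic: "continuous_map (subtopology X \<Gamma>1) (top_of_set (- {0})) \<phi>"
    using hms by (simp add: homeomorphic_maps_def)
  have psiphi: "\<psi>1 (\<phi> y) = y" if "y \<in> \<Gamma>1" for y
    using hms that tsp unfolding homeomorphic_maps_def by auto
  have phinz: "\<phi> y \<noteq> 0" if "y \<in> \<Gamma>1" for y
    using continuous_map_image_subset_topspace[OF phic] that tsp by auto
  define g where "g t = \<gamma> (cis t)" for t
  have cisc: "continuous_map euclidean (top_of_set (sphere (0::complex) 1)) cis"
    by (simp add: continuous_map_in_subtopology continuous_on_cis continuous_on_id)
  have gc: "continuous_map euclidean X g"
    using continuous_map_compose[OF cisc assms(2)] unfolding g_def o_def by simp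
  have gX: "g t \<in> topspace X" for t
    using continuous_map_image_subset_topspace[OF gc] by auto
  have gper: "g (t + 2*pi*k) = g t" for t and k :: int
    unfolding g_def by (simp only: cis_periodic_int)
  have ginj: "s = t" if "\<bar>s - t\<bar> < 2*pi" "g s = g t" for s t
  proof -
    have "cis s = cis t" using assms(3) that(2) unfolding g_def inj_on_def by simp
    then show ?thesis using cis_inj_small that(1) by blast
  qed
  define S where "S = {t. g t \<in> \<Gamma>1}"
  have Sopen: "open S"
    using openin_continuous_map_preimage[OF gc op] unfolding S_def by simp
  define h where "h t = \<phi> (g t)" for t
  have hc: "continuous_on T h" if "T \<subseteq> S" for T
  proof -
    have "continuous_map (top_of_set T) (subtopology X \<Gamma>1) g"
      using that unfolding continuous_map_in_subtopology S_def
      by (auto intro: continuous_map_from_subtopology[OF gc])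
    then have "continuous_map (top_of_set T) (top_of_set (- {0})) (\<phi> \<circ> g)"
      using continuous_map_compose phic by blast
    then show ?thesis unfolding h_def o_def by simp
  qed
  have hnz: "h t \<noteq> 0" if "t \<in> S" for t using that phinz unfolding S_def h_def by simp
  have hg: "\<psi>1 (h t) = g t" if "t \<in> S" for t using that psiphi unfolding S_def h_def by simp
  have hinj: "s = t" if "s \<in> S" "t \<in> S" "\<bar>s - t\<bar> < 2*pi" "h s = h t" for s t
    using ginj[OF that(3)] hg[OF that(1)] hg[OF that(2)] that(4) by simp
  obtain t0 where t0: "t0 \<in> S"
  proof
    have "z \<noteq> 0" using z(1) by auto
    then have zc: "cis (Arg z) = z" using z(1) by (simp add: cis_Arg sgn_div_norm)
    have "\<gamma> z \<in> topspace X" using continuous_map_image_subset_topspace[OF assms(2)] z(1) by auto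
    then show "Arg z \<in> S" using z(2) U zc unfolding S_def g_def by auto
  qed
  show False
  proof (cases "S = UNIV")
    case True
    have mono: "(h c < h (c + pi/2) \<and> h (c+pi/2) < h (c+pi)) \<or> (h (c+pi) < h (c+pi/2) \<and> h (c+pi/2) < h c)" for c
    proof (rule continuous_inj_imp_mono[of c "c+pi/2" "c+pi" h])
      show "c < c + pi/2" by simp
      show "c + pi/2 < c + pi" by simp
      show "continuous_on {c..c+pi} h" using hc True by blast
      show "inj_on h {c..c+pi}"
      proof (rule inj_onI)
        fix s t assume st: "s \<in> {c..c+pi}" "t \<in> {c..c+pi}" "h s = h t"
        have "\<bar>s - t\<bar> < 2*pi" 
          using st(1,2) pi_gt_zero unfolding abs_less_iff atLeastAtMost_iff by linarith
        then show "s = t" using hinj st(3) True by blast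
      qed
    qed
    have per: "h (t0 + 2*pi) = h t0" using gper[of t0 1] unfolding h_def by simp
    have e1: "t0 + pi/2 + pi/2 = t0 + pi" "t0 + pi + pi/2 = t0 + 3*pi/2" "t0 + pi/2 + pi = t0 + 3*pi/2"
       "t0 + pi + pi = t0 + 2*pi" by simp_all
    have m1: "(h t0 < h (t0 + pi/2) \<and> h (t0+pi/2) < h (t0+pi)) \<or> (h (t0+pi) < h (t0+pi/2) \<and> h (t0+pi/2) < h t0)"
      by (rule mono)
    have m2: "(h (t0 + pi/2) < h (t0+pi) \<and> h (t0+pi) < h (t0+3*pi/2)) \<or> (h (t0+3*pi/2) < h (t0+pi) \<and> h (t0+pi) < h (t0 + pi/2))"
      using mono[of "t0 + pi/2"] unfolding e1 .
    have m3: "(h (t0 + pi) < h (t0+3*pi/2) \<and> h (t0+3*pi/2) < h t0) \<or> (h t0 < h (t0+3*pi/2) \<and> h (t0+3*pi/2) < h (t0 + pi))"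
      using mono[of "t0 + pi"] unfolding e1 per .
    show False using m1 m2 m3 by (rule four_cyclic)
  next
    case False
    then obtain s where s: "s \<notin> S" by blast
    define k :: int where "k = floor ((t0 - s) / (2*pi))"
    define s' where "s' = s + 2*pi*k"
    have k1: "real_of_int k \<le> (t0 - s) / (2*pi)" "(t0 - s) / (2*pi) < real_of_int k + 1"
      unfolding k_def by linarith+
    have "2*pi*k \<le> t0 - s" using k1(1) pi_gt_zero by (simp add: field_simps)
    then have s'le: "s' \<le> t0" unfolding s'_def by simp
    have "t0 - s < 2*pi*(k+1)" using k1(2) pi_gt_zero by (simp add: field_simps)
    then have s'gt: "t0 - 2*pi < s'" unfolding s'_def by (simp add: algebra_simps)
    have s'S: "s' \<notin> S" using s gper[of s k] unfolding s'_def S_def by simp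
    have cS: "closed (- S)" using Sopen by (simp add: closed_Compl)
    define N where "N = (- S) \<inter> {t0 - 2*pi .. t0}"
    have Ncl: "closed N" unfolding N_def using cS by (intro closed_Int closed_atLeastAtMost)
    have s'N: "s' \<in> N" unfolding N_def using s'S s'le s'gt by simp
    have Nbdd: "bdd_above N" unfolding N_def by (rule bdd_above_Int2) simp
    define a where "a = Sup N"
    have aN: "a \<in> N" unfolding a_def using closed_contains_Sup[OF _ Nbdd Ncl] s'N by blast
    have aS: "a \<notin> S" "a \<le> t0" "t0 - 2*pi \<le> a" using aN unfolding N_def by auto
    have at0: "a < t0" using aS t0 by (cases "a = t0") auto
    have aS2: "t \<in> S" if "a < t" "t \<le> t0" for t
    proof (rule ccontr)
      assume "t \<notin> S"
      then have "t \<in> N" unfolding N_def using that aS by simp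
      then have "t \<le> a" unfolding a_def by (rule cSup_upper[OF _ Nbdd])
      then show False using that by simp
    qed
    have a2S: "a + 2*pi \<notin> S" using aS(1) gper[of a 1] unfolding S_def by simp
    define M where "M = (- S) \<inter> {t0 .. a + 2*pi}"
    have Mcl: "closed M" unfolding M_def using cS by (intro closed_Int closed_atLeastAtMost)
    have "t0 \<le> a + 2*pi" using aS(3) by linarith
    then have aM: "a + 2*pi \<in> M" unfolding M_def using a2S by simp
    have Mbdd: "bdd_below M" unfolding M_def by (rule bdd_below_Int2) simp
    define b where "b = Inf M"
    have bM: "b \<in> M" unfolding b_def using closed_contains_Inf[OF _ Mbdd Mcl] aM by blast
    have bS: "b \<notin> S" "t0 \<le> b" "b \<le> a + 2*pi" using bM unfolding M_def by auto
    have t0b: "t0 < b" using bS t0 by (cases "b = t0") auto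
    have bS2: "t \<in> S" if "t0 \<le> t" "t < b" for t
    proof (rule ccontr)
      assume "t \<notin> S"
      then have "t \<in> M" unfolding M_def using that bS by simp
      then have "b \<le> t" unfolding b_def by (rule cInf_lower[OF _ Mbdd])
      then show False using that by simp
    qed
    have abS: "{a<..<b} \<subseteq> S"
    proof
      fix t assume "t \<in> {a<..<b}"
      then show "t \<in> S" using aS2 bS2 by (cases "t \<le> t0") auto
    qed
    have hinjab: "u = v" if "u \<in> {a<..<b}" "v \<in> {a<..<b}" "h u = h v" for u v
    proof -
      have "\<bar>u - v\<bar> < 2*pi" using that(1,2) bS(3) unfolding abs_less_iff greaterThanLessThan_iff by linarith
      then show ?thesis using hinj abS that by blast
    qed
    have ga: "g a \<in> \<Gamma>2" using gX[of a] aS(1) U unfolding S_def by blast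
    have gb: "g b \<in> \<Gamma>2" using gX[of b] bS(1) U unfolding S_def by blast
    have limit: "0 islimpt h ` {c<..<d}"
      if cd: "c < d" "{c<..<d} \<subseteq> S" "e \<in> {c, d}" "g e \<in> \<Gamma>2" for c d e
    proof (rule L)
      show "h ` {c<..<d} \<subseteq> - {0}" using hnz cd(2) by auto
      have im: "\<psi>1 ` h ` {c<..<d} = g ` {c<..<d}" unfolding image_image
        using hg cd(2) by (intro image_cong) auto
      have "e \<in> closure {c<..<d}" using cd(1,3) by auto
      then have "g e \<in> X closure_of (g ` {c<..<d})"
        using continuous_map_image_closure_subset[OF gc, of "{c<..<d}"] by auto
      then show "\<Gamma>2 \<inter> X closure_of (\<psi>1 ` h ` {c<..<d}) \<noteq> {}" using im cd(4) by auto
    qed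
    have l1: "0 islimpt h ` {a<..<t0}"
      by (rule limit[of a t0 a]) (use at0 aS2 ga in auto)
    have l2: "0 islimpt h ` {t0<..<b}"
      by (rule limit[of t0 b b]) (use t0b bS2 gb in auto)
    have cR: "connected (h ` {a<..<b})"
      by (rule connected_continuous_image[OF hc[OF abS]]) simp
    have cQ: "connected (h ` {t0<..<b})"
      by (rule connected_continuous_image[OF hc]) (use abS at0 in auto)
    have "h ` {a<..<t0} \<inter> h ` {t0<..<b} \<noteq> {}"
    proof (rule interval_clash[OF cR _ _ _ cQ l1 l2])
      show "0 \<notin> h ` {a<..<b}" using hnz abS by auto
      show "h ` {a<..<t0} \<subseteq> h ` {a<..<b}" using t0b by (intro image_mono) auto
      show "h ` {t0<..<b} \<subseteq> h ` {a<..<b}" using at0 by (intro image_mono) auto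
      show "h ((t0 + b)/2) \<in> h ` {t0<..<b}" using t0b by auto
    qed
    then obtain y where y: "y \<in> h ` {a<..<t0}" "y \<in> h ` {t0<..<b}" by blast
    from y(1) obtain u where u: "u \<in> {a<..<t0}" "y = h u" by (rule imageE)
    from y(2) obtain v where v: "v \<in> {t0<..<b}" "y = h v" by (rule imageE)
    have uv: "u \<in> {a<..<t0}" "v \<in> {t0<..<b}" "h u = h v" using u v by simp_all
    have "u = v" using hinjab[OF _ _ uv(3)] uv(1,2) at0 t0b by auto
    then show False using uv(1,2) by simp
  qed
qed

end
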